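(* For every even $N\ge 2$, the matrix-valued function $F_{2,N}(z)$ (and hence $F_{1,N}(z)=I-F_{2,N}(z)$) has no pole at $z=1$, i.e. it extends analytically to $z=1$.
   Context: Fix $0<\alpha,\beta<1$. For $\varepsilon\in(0,1)$: $\phi_{\varepsilon,1}(z)=\begin{pmatrix}1&\varepsilon^2z^{-1}\\ \varepsilon^{-2}&1\end{pmatrix}$, $\phi_{\varepsilon,2}(z)=\frac{1}{1-z^{-1}}\phi_{\varepsilon,1}(z)$, $\phi_3(z)=\begin{pmatrix}1&z^{-1}\\1&1\end{pmatrix}$, $\phi_4(z)=\frac{1}{1-z^{-1}}\phi_3(z)$, $\Phi_\varepsilon=\phi_{\varepsilon,1}\phi_{\varepsilon,2}\phi_3\phi_4$. Let $\phi_N(z)=\Phi_\alpha(z)^{N/2}\Phi_\beta(z)^{N/2}$, $t_N=\operatorname{tr}\phi_N$; in a punctured neighborhood of $1$ the eigenvalues are $r_{1,N}=\frac12(t_N+\sqrt{t_N^2-4})$, $r_{2,N}=\frac12(t_N-\sqrt{t_N^2-4})$ with $\sqrt{t^2-4}=t(1-4/t^2)^{1/2}$ (principal branch), and $F_{1,N}(z),F_{2,N}(z)$ are the corresponding spectral projections ($\phi_N=r_{1,N}F_{1,N}+r_{2,N}F_{2,N}$, $F_{1,N}+F_{2,N}=I$, $F_{k,N}^2=F_{k,N}$, $F_{1,N}F_{2,N}=0$). *)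

theory Defs
  imports "HOL-Analysis.Analysis"
begin

text \<open>2x2 complex matrices are rendered as complex^2^2; rows/columns indexed by (1::2), (2::2).\<close>

definition mat2 :: "complex \<Rightarrow> complex \<Rightarrow> complex \<Rightarrow> complex \<Rightarrow> complex^2^2" where
  "mat2 a b c d = (\<chi> i j. if i = 1 then (if j = 1 then a else b) else (if j = 1 then c else d))"

definition msmult :: "complex \<Rightarrow> complex^2^2 \<Rightarrow> complex^2^2" where
  "msmult c A = (\<chi> i j. c * A $ i $ j)"

fun mpow :: "complex^2^2 \<Rightarrow> nat \<Rightarrow> complex^2^2" where
  "mpow A 0 = mat 1"
| "mpow A (Suc n) = A ** mpow A n"

definition phi1 :: "real \<Rightarrow> complex \<Rightarrow> complex^2^2" where
  "phi1 \<epsilon> z = mat2 1 (of_real \<epsilon> ^ 2 * inverse z) (inverse (of_real \<epsilon> ^ 2)) 1"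

definition phi2 :: "real \<Rightarrow> complex \<Rightarrow> complex^2^2" where
  "phi2 \<epsilon> z = msmult (1 / (1 - inverse z)) (phi1 \<epsilon> z)"

definition phi3 :: "complex \<Rightarrow> complex^2^2" where
  "phi3 z = mat2 1 (inverse z) 1 1"

definition phi4 :: "complex \<Rightarrow> complex^2^2" where
  "phi4 z = msmult (1 / (1 - inverse z)) (phi3 z)"

definition Phi :: "real \<Rightarrow> complex \<Rightarrow> complex^2^2" where
  "Phi \<epsilon> z = phi1 \<epsilon> z ** phi2 \<epsilon> z ** phi3 z ** phi4 z"

definition phiN :: "real \<Rightarrow> real \<Rightarrow> nat \<Rightarrow> complex \<Rightarrow> complex^2^2" where
  "phiN \<alpha> \<beta> N z = mpow (Phi \<alpha> z) (N div 2) ** mpow (Phi \<beta> z) (N div 2)"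

definition tN :: "real \<Rightarrow> real \<Rightarrow> nat \<Rightarrow> complex \<Rightarrow> complex" where
  "tN \<alpha> \<beta> N z = trace (phiN \<alpha> \<beta> N z)"

text \<open>sqrt(t^2-4) := t * (1 - 4/t^2)^(1/2), principal branch (csqrt)\<close>
definition sq4 :: "complex \<Rightarrow> complex" where
  "sq4 t = t * csqrt (1 - 4 / t ^ 2)"

definition r1N :: "real \<Rightarrow> real \<Rightarrow> nat \<Rightarrow> complex \<Rightarrow> complex" where
  "r1N \<alpha> \<beta> N z = (tN \<alpha> \<beta> N z + sq4 (tN \<alpha> \<beta> N z)) / 2"

definition r2N :: "real \<Rightarrow> real \<Rightarrow> nat \<Rightarrow> complex \<Rightarrow> complex" where
  "r2N \<alpha> \<beta> N z = (tN \<alpha> \<beta> N z - sq4 (tN \<alpha> \<beta> N z)) / 2"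

end

theory Submission
  imports Defs
begin

lemma mat2_mult: "mat2 a b c d ** mat2 a' b' c' d' = mat2 (a*a'+b*c') (a*b'+b*d') (c*a'+d*c') (c*b'+d*d')"
  unfolding mat2_def matrix_matrix_mult_def
  by (simp add: vec_eq_iff sum_2 forall_2)

lemma msmult_left: "msmult c A ** B = msmult c (A ** B)"
  unfolding msmult_def matrix_matrix_mult_def by (simp add: vec_eq_iff sum_distrib_left mult.assoc)

lemma msmult_right: "A ** msmult c B = msmult c (A ** B)"
  unfolding msmult_def matrix_matrix_mult_def by (simp add: vec_eq_iff sum_distrib_left ac_simps)

lemma msmult_msmult: "msmult c (msmult d A) = msmult (c*d) A"
  unfolding msmult_def by (simp add: vec_eq_iff mult.assoc)

lemma msmult_one: "msmult 1 A = A"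
  unfolding msmult_def by (simp add: vec_eq_iff)

lemma mpow_msmult: "mpow (msmult c A) n = msmult (c^n) (mpow A n)"
  by (induction n) (simp_all add: msmult_one msmult_left msmult_right msmult_msmult mult.commute)

lemma trace_mat2: "trace (mat2 a b c d) = a + d"
  unfolding mat2_def trace_def by (simp add: sum_2)

lemma mpow_rank1: "mpow (mat2 x x y y) (Suc k) = msmult ((x+y)^k) (mat2 x x y y)"
proof (induction k)
  case 0 then show ?case by (simp add: msmult_one mat2_mult[symmetric] matrix_mul_rid)
next
  case (Suc k)
  have "mpow (mat2 x x y y) (Suc (Suc k)) = mat2 x x y y ** mpow (mat2 x x y y) (Suc k)" by simp
  also have "\<dots> = msmult ((x+y)^k) (mat2 x x y y ** mat2 x x y y)" using Suc by (simp only: msmult_right)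
  also have "mat2 x x y y ** mat2 x x y y = msmult (x+y) (mat2 x x y y)"
    unfolding mat2_mult by (simp add: msmult_def mat2_def vec_eq_iff forall_2 algebra_simps)
  finally show ?case by (simp add: msmult_msmult mult.commute)
qed

definition P :: "real \<Rightarrow> complex \<Rightarrow> complex^2^2" where
  "P e z = phi1 e z ** phi1 e z ** phi3 z ** phi3 z"

lemma Phi_eq: "Phi e z = msmult ((1/(1-inverse z))^2) (P e z)"
  unfolding Phi_def phi2_def phi4_def P_def
  by (simp add: msmult_left msmult_right msmult_msmult power2_eq_square)

definition M :: "real \<Rightarrow> real \<Rightarrow> nat \<Rightarrow> complex \<Rightarrow> complex^2^2" where
  "M a b N z = mpow (P a z) (N div 2) ** mpow (P b z) (N div 2)"

lemma phiN_eq: "phiN a b N z = msmult ((1/(1-inverse z))^(4*(N div 2))) (M a b N z)"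
  unfolding phiN_def M_def Phi_eq mpow_msmult
  by (simp add: msmult_left msmult_right msmult_msmult power_mult[symmetric] power_add[symmetric] mult_2[symmetric])

lemma mat2_eqI: "a=a' \<Longrightarrow> b=b' \<Longrightarrow> c=c' \<Longrightarrow> d=d' \<Longrightarrow> mat2 a b c d = mat2 a' b' c' d'" by simp

lemma P_1: assumes "e > 0"
  shows "P e 1 = mat2 (4+4 * of_real (e^2)) (4+4 * of_real (e^2)) (4+4 * inverse (of_real (e^2))) (4+4 * inverse (of_real (e^2)))"
  unfolding P_def phi1_def phi3_def mat2_mult
  apply (rule mat2_eqI) using assms apply (simp_all add: field_simps eval_nat_numeral)
  done

definition ana :: "(complex \<Rightarrow> complex^2^2) \<Rightarrow> bool" where
  "ana A \<longleftrightarrow> (\<forall>i j. (\<lambda>z. A z $ i $ j) analytic_on {1})"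

lemma ana_mult: "ana A \<Longrightarrow> ana B \<Longrightarrow> ana (\<lambda>z. A z ** B z)"
  unfolding ana_def matrix_matrix_mult_def
  by (auto intro!: analytic_on_sum analytic_on_mult)

lemma ana_mpow: "ana A \<Longrightarrow> ana (\<lambda>z. mpow (A z) n)"
proof (induction n)
  case 0 then show ?case unfolding ana_def by simp
next
  case (Suc n) then show ?case using ana_mult[of A "\<lambda>z. mpow (A z) n"] by simp
qed

lemma ana_mat2:
  assumes "a analytic_on {1}" "b analytic_on {1}" "c analytic_on {1}" "d analytic_on {1}"
  shows "ana (\<lambda>z. mat2 (a z) (b z) (c z) (d z))"
  unfolding ana_def mat2_def
proof (intro allI)
  fix i j :: 2
  show "(\<lambda>z. (\<chi> i j. if i = 1 then if j = 1 then a z else b z else if j = 1 then c z else d z) $ i $ j) analytic_on {1}"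
    using assms by (cases "i = 1"; cases "j = 1") simp_all
qed

lemma inv_ana: "(\<lambda>z::complex. inverse z) analytic_on {1}"
  by (rule analytic_on_inverse) auto

lemma ana_P: "ana (P e)"
proof -
  have a1: "ana (phi1 e)" unfolding phi1_def
    by (rule ana_mat2) (auto intro!: analytic_on_mult inv_ana)
  have a3: "ana phi3" unfolding phi3_def
    by (rule ana_mat2) (auto intro!: inv_ana)
  show ?thesis unfolding P_def
    by (intro ana_mult a1 a3)
qed

lemma ana_M: "ana (M a b N)"
  unfolding M_def by (intro ana_mult ana_mpow ana_P)

lemma trace_msmult: "trace (msmult c A) = c * trace A"
  unfolding trace_def msmult_def by (simp add: sum_distrib_left)

lemma M_1_trace:
  assumes "0 < a" "0 < b" "N \<ge> 2"
  shows "trace (M a b N 1) \<noteq> 0"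
proof -
  obtain m where m: "N div 2 = Suc m" using assms(3) by (cases "N div 2") auto
  define x where "x = 4 + 4 * complex_of_real (a^2)"
  define y where "y = 4 + 4 * inverse (complex_of_real (a^2))"
  define u where "u = 4 + 4 * complex_of_real (b^2)"
  define v where "v = 4 + 4 * inverse (complex_of_real (b^2))"
  have xy: "x + y \<noteq> 0"
  proof -
    have "x + y = complex_of_real (8 + 4*a^2 + 4/a^2)" unfolding x_def y_def
      by (simp add: of_real_inverse[symmetric] divide_inverse del: of_real_inverse) (metis of_real_inverse of_real_power)
    moreover have "8 + 4*a^2 + 4/a^2 > (0::real)" using assms(1) by (simp add: add_pos_pos)
    ultimately have "Re (x + y) > 0" by simp
    then show ?thesis by (metis zero_complex.simps(1) less_irrefl)
  qed
  have uv: "u + v \<noteq> 0"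
  proof -
    have "u + v = complex_of_real (8 + 4*b^2 + 4/b^2)" unfolding u_def v_def
      by (simp add: of_real_inverse[symmetric] divide_inverse del: of_real_inverse) (metis of_real_inverse of_real_power)
    moreover have "8 + 4*b^2 + 4/b^2 > (0::real)" using assms(2) by (simp add: add_pos_pos)
    ultimately have "Re (u + v) > 0" by simp
    then show ?thesis by (metis zero_complex.simps(1) less_irrefl)
  qed
  have "M a b N 1 = msmult ((x+y)^m) (mat2 x x y y) ** msmult ((u+v)^m) (mat2 u u v v)"
    unfolding M_def m P_1[OF assms(1)] P_1[OF assms(2)] x_def y_def u_def v_def mpow_rank1 ..
  also have "\<dots> = msmult ((x+y)^m * (u+v)^m) (mat2 (x*(u+v)) (x*(u+v)) (y*(u+v)) (y*(u+v)))"
    by (simp add: msmult_left msmult_right msmult_msmult mat2_mult ac_simps distrib_left)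
  finally have "trace (M a b N 1) = (x+y)^m * (u+v)^m * ((x+y)*(u+v))"
    by (simp add: trace_msmult trace_mat2 distrib_right)
  then show ?thesis using xy uv by simp
qed

lemma helper_alg: "(h*T + h*T*C)/2 * F + (h*T - h*T*C)/2 * (I - F) = h * (T*C*F + T*(1-C)/2*(I::complex))"
  by (simp add: field_simps)

theorem lemma3p5:
  fixes \<alpha> \<beta> :: real and N :: nat and F1 F2 :: "complex \<Rightarrow> complex^2^2"
  assumes "0 < \<alpha>" "\<alpha> < 1" "0 < \<beta>" "\<beta> < 1"
    and "even N" "N \<ge> 2"
    and spectral: "eventually (\<lambda>z.
        phiN \<alpha> \<beta> N z = msmult (r1N \<alpha> \<beta> N z) (F1 z) + msmult (r2N \<alpha> \<beta> N z) (F2 z)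
      \<and> F1 z + F2 z = mat 1
      \<and> F1 z ** F1 z = F1 z \<and> F2 z ** F2 z = F2 z
      \<and> F1 z ** F2 z = 0) (at 1)"
  shows "\<exists>G1 G2 :: complex \<Rightarrow> complex^2^2.
           (\<forall>i j. (\<lambda>z. G1 z $ i $ j) analytic_on {1} \<and> (\<lambda>z. G2 z $ i $ j) analytic_on {1})
         \<and> eventually (\<lambda>z. F1 z = G1 z \<and> F2 z = G2 z) (at 1)"
proof -
  define k where "k = 4 * (N div 2)"
  have kpos: "k > 0" using assms(6) unfolding k_def by simp
  define g where "g z = (1 - inverse z) ^ k" for z :: complex
  define T where "T z = trace (M \<alpha> \<beta> N z)" for z
  define f where "f z = 1 - 4 * (g z)^2 / (T z)^2" for z
  define C where "C z = csqrt (f z)" for z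
  define G1 where "G1 z = msmult (inverse (T z * C z)) (M \<alpha> \<beta> N z - msmult (T z * (1 - C z) / 2) (mat 1))" for z
  define G2 where "G2 z = mat 1 - G1 z" for z
  have Mana: "\<And>i j. (\<lambda>z. M \<alpha> \<beta> N z $ i $ j) analytic_on {1}"
    using ana_M unfolding ana_def by blast
  have Tana: "T analytic_on {1}"
    unfolding T_def trace_def by (intro analytic_on_sum Mana)
  have T1: "T 1 \<noteq> 0" unfolding T_def using M_1_trace assms by auto
  have g1: "g 1 = 0" unfolding g_def using kpos by simp
  have gana: "g analytic_on {1}" unfolding g_def
    by (intro analytic_on_power analytic_on_diff analytic_on_const inv_ana)
  have fana: "f analytic_on {1}" unfolding f_def
    using T1 by (intro analytic_on_diff analytic_on_const analytic_on_divide analytic_on_mult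
        analytic_on_power gana Tana) auto
  have f1: "f 1 = 1" unfolding f_def g1 by simp
  have Cana: "C analytic_on {1}" unfolding C_def
    using f1 by (intro analytic_on_csqrt' fana) auto
  have C1: "C 1 = 1" unfolding C_def f1 by simp
  have TCana: "(\<lambda>z. inverse (T z * C z)) analytic_on {1}"
    using T1 C1 by (intro analytic_on_inverse analytic_on_mult Tana Cana) auto
  have G1ana: "(\<lambda>z. G1 z $ i $ j) analytic_on {1}" for i j
  proof -
    have eq: "(\<lambda>z. G1 z $ i $ j) = (\<lambda>z. inverse (T z * C z) * (M \<alpha> \<beta> N z $ i $ j - T z * (1 - C z) / 2 * (mat 1 $ i $ j)))"
      unfolding G1_def msmult_def by simp
    show ?thesis unfolding eq
      by (intro analytic_on_mult analytic_on_diff analytic_on_divide analytic_on_const TCana Mana Tana Cana) auto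
  qed
  have G2ana: "(\<lambda>z. G2 z $ i $ j) analytic_on {1}" for i j
  proof -
    have eq: "(\<lambda>z. G2 z $ i $ j) = (\<lambda>z. mat 1 $ i $ j - G1 z $ i $ j)"
      unfolding G2_def by simp
    show ?thesis unfolding eq
      by (intro analytic_on_diff analytic_on_const G1ana)
  qed
  have ev0: "eventually (\<lambda>z. z \<noteq> 0) (at (1::complex))"
    using analytic_at_neq_imp_eventually_neq[of "\<lambda>z. z" 1 0] by simp
  have ev1: "eventually (\<lambda>z. z \<noteq> 1) (at (1::complex))"
    by (simp add: eventually_at_filter)
  have evT: "eventually (\<lambda>z. T z \<noteq> 0) (at 1)"
    using analytic_at_neq_imp_eventually_neq[OF Tana T1] .
  have evC: "eventually (\<lambda>z. C z \<noteq> 0) (at 1)"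
    using analytic_at_neq_imp_eventually_neq[OF Cana] C1 by simp
  have "eventually (\<lambda>z. F1 z = G1 z \<and> F2 z = G2 z) (at 1)"
    using ev0 ev1 evT evC spectral
  proof eventually_elim
    case (elim z)
    then have z0: "z \<noteq> 0" and z1: "z \<noteq> 1" and Tz: "T z \<noteq> 0" and Cz: "C z \<noteq> 0"
      and sp: "phiN \<alpha> \<beta> N z = msmult (r1N \<alpha> \<beta> N z) (F1 z) + msmult (r2N \<alpha> \<beta> N z) (F2 z)"
      and sum: "F1 z + F2 z = mat 1" by auto
    define h where "h = (1 / (1 - inverse z)) ^ k"
    have iz: "1 - inverse z \<noteq> 0" using z1 z0
      by (metis inverse_1 inverse_inverse_eq right_minus_eq)
    have h0: "h \<noteq> 0" unfolding h_def using iz by simp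
    have gh: "g z = inverse h" unfolding g_def h_def by (simp add: power_divide divide_inverse power_inverse)
    have phi: "phiN \<alpha> \<beta> N z = msmult h (M \<alpha> \<beta> N z)"
      unfolding phiN_eq h_def k_def ..
    have t: "tN \<alpha> \<beta> N z = h * T z"
      unfolding tN_def phi trace_msmult T_def ..
    have sq: "sq4 (tN \<alpha> \<beta> N z) = h * T z * C z"
    proof -
      have "4 / (h * T z)^2 = 4 * (g z)^2 / (T z)^2"
        using h0 Tz unfolding gh by (simp add: field_simps)
      then show ?thesis unfolding sq4_def t C_def f_def by simp
    qed
    have r1: "r1N \<alpha> \<beta> N z = (h * T z + h * T z * C z) / 2" unfolding r1N_def using sq t by simp
    have r2: "r2N \<alpha> \<beta> N z = (h * T z - h * T z * C z) / 2" unfolding r2N_def using sq t by simp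
    have F1eq: "F1 z = G1 z"
    proof -
      have "F1 z $ i $ j = G1 z $ i $ j" for i j
      proof -
        have e1: "h * M \<alpha> \<beta> N z $ i $ j = r1N \<alpha> \<beta> N z * F1 z $ i $ j + r2N \<alpha> \<beta> N z * F2 z $ i $ j"
          using arg_cong[OF sp, of "\<lambda>A. A $ i $ j"] unfolding phi msmult_def by simp
        have e2: "F2 z $ i $ j = mat 1 $ i $ j - F1 z $ i $ j"
          using arg_cong[OF sum, of "\<lambda>A. A $ i $ j"] by (simp add: eq_diff_eq add.commute)
        have "h * M \<alpha> \<beta> N z $ i $ j = h * (T z * C z * F1 z $ i $ j + T z * (1 - C z) / 2 * mat 1 $ i $ j)"
          using e1 unfolding e2 r1 r2 helper_alg .
        then have e3: "M \<alpha> \<beta> N z $ i $ j = T z * C z * F1 z $ i $ j + T z * (1 - C z) / 2 * mat 1 $ i $ j"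
          using h0 by simp
        show ?thesis
          unfolding G1_def msmult_def using Tz Cz
          by (simp add: e3 vector_minus_component) (simp add: field_simps)
      qed
      then show ?thesis by (simp add: vec_eq_iff)
    qed
    moreover have "F2 z = G2 z" unfolding G2_def F1eq[symmetric] sum[symmetric] by simp
    ultimately show ?case by simp
  qed
  then show ?thesis using G1ana G2ana by blast
qed

end
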